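(* Let $\mathbb{L}$ be a complete lattice, let $E^1,E^2$ be bounded spectral families in $\mathbb{L}$, and define $E_{\lambda,\mu}:=E^1_\lambda\wedge E^2_\mu$ for $\lambda,\mu\in\mathbb{R}$. Then $E=(E_{\lambda,\mu})_{\lambda,\mu\in\mathbb{R}}$ is a bounded complex spectral family, and the function associated to $E$ is $f_E=f_{E^1}+i\,f_{E^2}$.
   Context: A spectral family in $\mathbb{L}$ (with $0$, $1$) is a map $F:\mathbb{R}\to\mathbb{L}$ with $F_\lambda\le F_\mu$ for $\lambda\le\mu$, $F_\lambda=\bigwedge_{\mu>\lambda}F_\mu$, $\bigwedge_\lambda F_\lambda=0$, $\bigvee_\lambda F_\lambda=1$; it is bounded if there are $a\le b$ with $F_\lambda=0$ for $\lambda<a$ and $F_\lambda=1$ for $\lambda\ge b$; its associated function on the Stone spectrum is $f_F(\mathfrak{B})=\inf\{\lambda\mid F_\lambda\in\mathfrak{B}\}$. The Stone spectrum $\mathcal{Q}(\mathbb{L})$ is the set of quasipoints (maximal dual ideals: maximal nonempty upward closed subsets not containing $0$, closed under finite meets) with the topology generated by $\{\mathfrak{B}\mid a\in\mathfrak{B}\}$, $a\in\mathbb{L}$. A complex (2-parameter) spectral family is a map $E:\mathbb{R}^2\to\mathbb{L}$ with (i) $E_{\lambda_1,\lambda_2}\wedge E_{\mu_1,\mu_2}=E_{\min\{\lambda_1,\mu_1\},\min\{\lambda_2,\mu_2\}}$; (ii) $\bigwedge_{\lambda_1<\mu_1,\lambda_2<\mu_2}E_{\mu_1,\mu_2}=E_{\lambda_1,\lambda_2}$;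 (iii) $\bigwedge_{\lambda}E_{\lambda,\lambda_2}=0=\bigwedge_\lambda E_{\lambda_1,\lambda}$ for all $\lambda_1,\lambda_2$, and $\bigvee_{\lambda_1,\lambda_2}E_{\lambda_1,\lambda_2}=1$. It is bounded if there are $m,M'$ with $E_{\lambda_1,\lambda_2}=0$ whenever some $\lambda_k\le m$ and $E_{\lambda_1,\lambda_2}=1$ whenever $\lambda_1,\lambda_2\ge M'$. For such $E$, $f_E:\mathcal{Q}(\mathbb{L})\to\mathbb{C}$ is $f_E=f_{E,1}+if_{E,2}$ with $f_{E,1}(\mathfrak{B})=\inf\{\lambda\mid\exists\mu: E_{\lambda,\mu}\in\mathfrak{B}\}$ and $f_{E,2}(\mathfrak{B})=\inf\{\mu\mid\exists\lambda: E_{\lambda,\mu}\in\mathfrak{B}\}$. *)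

theory Defs
  imports Complex_Main
begin

definition spectral_family :: "(real \<Rightarrow> 'a::complete_lattice) \<Rightarrow> bool" where
  "spectral_family F \<longleftrightarrow>
     (\<forall>l u. l \<le> u \<longrightarrow> F l \<le> F u) \<and>
     (\<forall>l. F l = Inf (F ` {u. u > l})) \<and>
     Inf (range F) = bot \<and> Sup (range F) = top"

definition bounded_spectral_family :: "(real \<Rightarrow> 'a::complete_lattice) \<Rightarrow> bool" where
  "bounded_spectral_family F \<longleftrightarrow> spectral_family F \<and>
     (\<exists>a b. a \<le> b \<and> (\<forall>l. l < a \<longrightarrow> F l = bot) \<and> (\<forall>l. l \<ge> b \<longrightarrow> F l = top))"

definition dual_ideal :: "'a::complete_lattice set \<Rightarrow> bool" where
  "dual_ideal B \<longleftrightarrow> B \<noteq> {} \<and> bot \<notin> B \<and>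
     (\<forall>a b. a \<in> B \<and> a \<le> b \<longrightarrow> b \<in> B) \<and>
     (\<forall>a b. a \<in> B \<and> b \<in> B \<longrightarrow> inf a b \<in> B)"

definition quasipoint :: "'a::complete_lattice set \<Rightarrow> bool" where
  "quasipoint B \<longleftrightarrow> dual_ideal B \<and> (\<forall>C. dual_ideal C \<and> B \<subseteq> C \<longrightarrow> C = B)"

text \<open>The Stone spectrum as a set of quasipoints (the topology is not needed here).\<close>
definition stone_spectrum :: "'a::complete_lattice set set" where
  "stone_spectrum = {B. quasipoint B}"

definition assoc_fun :: "(real \<Rightarrow> 'a::complete_lattice) \<Rightarrow> 'a set \<Rightarrow> real" where
  "assoc_fun F B = Inf {l. F l \<in> B}"

definition complex_spectral_family :: "(real \<Rightarrow> real \<Rightarrow> 'a::complete_lattice) \<Rightarrow> bool" where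
  "complex_spectral_family E \<longleftrightarrow>
     (\<forall>l1 l2 m1 m2. inf (E l1 l2) (E m1 m2) = E (min l1 m1) (min l2 m2)) \<and>
     (\<forall>l1 l2. Inf {E m1 m2 | m1 m2. l1 < m1 \<and> l2 < m2} = E l1 l2) \<and>
     (\<forall>l2. Inf {E l l2 | l. True} = bot) \<and>
     (\<forall>l1. Inf {E l1 l | l. True} = bot) \<and>
     Sup {E l1 l2 | l1 l2. True} = top"

definition bounded_complex_spectral_family :: "(real \<Rightarrow> real \<Rightarrow> 'a::complete_lattice) \<Rightarrow> bool" where
  "bounded_complex_spectral_family E \<longleftrightarrow> complex_spectral_family E \<and>
     (\<exists>m M'. (\<forall>l1 l2. (l1 \<le> m \<or> l2 \<le> m) \<longrightarrow> E l1 l2 = bot) \<and>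
             (\<forall>l1 l2. (l1 \<ge> M' \<and> l2 \<ge> M') \<longrightarrow> E l1 l2 = top))"

definition assoc_fun_re :: "(real \<Rightarrow> real \<Rightarrow> 'a::complete_lattice) \<Rightarrow> 'a set \<Rightarrow> real" where
  "assoc_fun_re E B = Inf {l. \<exists>u. E l u \<in> B}"

definition assoc_fun_im :: "(real \<Rightarrow> real \<Rightarrow> 'a::complete_lattice) \<Rightarrow> 'a set \<Rightarrow> real" where
  "assoc_fun_im E B = Inf {u. \<exists>l. E l u \<in> B}"

definition assoc_fun_complex :: "(real \<Rightarrow> real \<Rightarrow> 'a::complete_lattice) \<Rightarrow> 'a set \<Rightarrow> complex" where
  "assoc_fun_complex E B = Complex (assoc_fun_re E B) (assoc_fun_im E B)"

end

theory Submission
  imports Defs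
begin

lemma Inf_inf_prod:
  fixes f g :: "real \<Rightarrow> 'a::complete_lattice"
  assumes "A \<noteq> {}" "C \<noteq> {}"
  shows "Inf {inf (f x) (g y) | x y. x \<in> A \<and> y \<in> C} = inf (Inf (f ` A)) (Inf (g ` C))"
proof (rule antisym)
  obtain y0 where y0: "y0 \<in> C" using assms by auto
  obtain x0 where x0: "x0 \<in> A" using assms by auto
  show "Inf {inf (f x) (g y) | x y. x \<in> A \<and> y \<in> C} \<le> inf (Inf (f ` A)) (Inf (g ` C))"
  proof (rule le_infI)
    show "Inf {inf (f x) (g y) | x y. x \<in> A \<and> y \<in> C} \<le> Inf (f ` A)"
    proof (rule Inf_greatest)
      fix z assume "z \<in> f ` A"
      then obtain x where x: "x \<in> A" "z = f x" by auto
      have "Inf {inf (f x) (g y) | x y. x \<in> A \<and> y \<in> C} \<le> inf (f x) (g y0)"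
        by (rule Inf_lower) (use x y0 in blast)
      also have "\<dots> \<le> z" using x by simp
      finally show "Inf {inf (f x) (g y) | x y. x \<in> A \<and> y \<in> C} \<le> z" .
    qed
    show "Inf {inf (f x) (g y) | x y. x \<in> A \<and> y \<in> C} \<le> Inf (g ` C)"
    proof (rule Inf_greatest)
      fix z assume "z \<in> g ` C"
      then obtain y where y: "y \<in> C" "z = g y" by auto
      have "Inf {inf (f x) (g y) | x y. x \<in> A \<and> y \<in> C} \<le> inf (f x0) (g y)"
        by (rule Inf_lower) (use y x0 in blast)
      also have "\<dots> \<le> z" using y by simp
      finally show "Inf {inf (f x) (g y) | x y. x \<in> A \<and> y \<in> C} \<le> z" .
    qed
  qed
  show "inf (Inf (f ` A)) (Inf (g ` C)) \<le> Inf {inf (f x) (g y) | x y. x \<in> A \<and> y \<in> C}"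
  proof (rule Inf_greatest)
    fix z assume "z \<in> {inf (f x) (g y) | x y. x \<in> A \<and> y \<in> C}"
    then obtain x y where xy: "x \<in> A" "y \<in> C" "z = inf (f x) (g y)" by auto
    have "Inf (f ` A) \<le> f x" using xy by (intro Inf_lower) auto
    moreover have "Inf (g ` C) \<le> g y" using xy by (intro Inf_lower) auto
    ultimately show "inf (Inf (f ` A)) (Inf (g ` C)) \<le> z" using xy inf_mono by blast
  qed
qed

theorem proposition2p17:
  fixes E1 E2 :: "real \<Rightarrow> 'a::complete_lattice"
  assumes "bounded_spectral_family E1" and "bounded_spectral_family E2"
  defines "E \<equiv> (\<lambda>l u. inf (E1 l) (E2 u))"
  shows "bounded_complex_spectral_family E \<and>
         (\<forall>B \<in> stone_spectrum.
            assoc_fun_complex E B =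
              complex_of_real (assoc_fun E1 B) + \<i> * complex_of_real (assoc_fun E2 B))"
proof -
  from assms(1) obtain a1 b1 where sf1: "spectral_family E1" and
    ab1: "a1 \<le> b1" "\<forall>l. l < a1 \<longrightarrow> E1 l = bot" "\<forall>l. l \<ge> b1 \<longrightarrow> E1 l = top"
    unfolding bounded_spectral_family_def by blast
  from assms(2) obtain a2 b2 where sf2: "spectral_family E2" and
    ab2: "a2 \<le> b2" "\<forall>l. l < a2 \<longrightarrow> E2 l = bot" "\<forall>l. l \<ge> b2 \<longrightarrow> E2 l = top"
    unfolding bounded_spectral_family_def by blast
  have mono1: "\<And>l u. l \<le> u \<Longrightarrow> E1 l \<le> E1 u" and rc1: "\<And>l. E1 l = Inf (E1 ` {u. u > l})"
    using sf1 unfolding spectral_family_def by blast+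
  have mono2: "\<And>l u. l \<le> u \<Longrightarrow> E2 l \<le> E2 u" and rc2: "\<And>l. E2 l = Inf (E2 ` {u. u > l})"
    using sf2 unfolding spectral_family_def by blast+
  have c1: "inf (E l1 l2) (E m1 m2) = E (min l1 m1) (min l2 m2)" for l1 l2 m1 m2
  proof -
    have "inf (E1 l1) (E1 m1) = E1 (min l1 m1)"
      by (cases "l1 \<le> m1") (auto simp: min_def mono1 inf_absorb1 inf_absorb2)
    moreover have "inf (E2 l2) (E2 m2) = E2 (min l2 m2)"
      by (cases "l2 \<le> m2") (auto simp: min_def mono2 inf_absorb1 inf_absorb2)
    moreover have "inf (E l1 l2) (E m1 m2) = inf (inf (E1 l1) (E1 m1)) (inf (E2 l2) (E2 m2))"
      unfolding E_def by (simp add: ac_simps)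
    ultimately show ?thesis unfolding E_def by simp
  qed
  have c2: "Inf {E m1 m2 | m1 m2. l1 < m1 \<and> l2 < m2} = E l1 l2" for l1 l2
  proof -
    have "{E m1 m2 | m1 m2. l1 < m1 \<and> l2 < m2} =
          {inf (E1 x) (E2 y) | x y. x \<in> {u. u > l1} \<and> y \<in> {u. u > l2}}"
      unfolding E_def by auto
    moreover have "{u::real. u > l1} \<noteq> {}" "{u::real. u > l2} \<noteq> {}"
      using gt_ex by auto
    ultimately have "Inf {E m1 m2 | m1 m2. l1 < m1 \<and> l2 < m2} =
        inf (Inf (E1 ` {u. u > l1})) (Inf (E2 ` {u. u > l2}))"
      using Inf_inf_prod[of "{u. u > l1}" "{u. u > l2}" E1 E2] by simp
    thus ?thesis unfolding E_def using rc1[of l1] rc2[of l2] by simp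
  qed
  have c3: "Inf {E l l2 | l. True} = bot" for l2
  proof -
    have "E (a1 - 1) l2 = bot" using ab1 unfolding E_def by simp
    moreover have "Inf {E l l2 | l. True} \<le> E (a1 - 1) l2" by (rule Inf_lower) blast
    ultimately have "Inf {E l l2 | l. True} \<le> bot" by simp
    thus ?thesis by (simp add: bot_unique)
  qed
  have c4: "Inf {E l1 l | l. True} = bot" for l1
  proof -
    have "E l1 (a2 - 1) = bot" using ab2 unfolding E_def by simp
    moreover have "Inf {E l1 l | l. True} \<le> E l1 (a2 - 1)" by (rule Inf_lower) blast
    ultimately have "Inf {E l1 l | l. True} \<le> bot" by simp
    thus ?thesis by (simp add: bot_unique)
  qed
  have c5: "Sup {E l1 l2 | l1 l2. True} = top"
  proof -
    have "E b1 b2 = top" using ab1 ab2 unfolding E_def by simp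
    moreover have "E b1 b2 \<le> Sup {E l1 l2 | l1 l2. True}" by (rule Sup_upper) blast
    ultimately have "top \<le> Sup {E l1 l2 | l1 l2. True}" by simp
    thus ?thesis by (simp add: top_unique)
  qed
  have bd: "\<exists>m M'. (\<forall>l1 l2. (l1 \<le> m \<or> l2 \<le> m) \<longrightarrow> E l1 l2 = bot) \<and>
             (\<forall>l1 l2. (l1 \<ge> M' \<and> l2 \<ge> M') \<longrightarrow> E l1 l2 = top)"
    apply (rule exI[of _ "min a1 a2 - 1"], rule exI[of _ "max b1 b2"])
    using ab1 ab2 unfolding E_def by auto
  have part1: "bounded_complex_spectral_family E"
    unfolding bounded_complex_spectral_family_def complex_spectral_family_def
    using c1 c2 c3 c4 c5 bd by blast
  have part2: "assoc_fun_complex E B =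
              complex_of_real (assoc_fun E1 B) + \<i> * complex_of_real (assoc_fun E2 B)"
    if "B \<in> stone_spectrum" for B
  proof -
    have up: "\<And>x y. x \<in> B \<Longrightarrow> x \<le> y \<Longrightarrow> y \<in> B"
      using that unfolding stone_spectrum_def quasipoint_def dual_ideal_def by blast
    have s1: "{l. \<exists>u. E l u \<in> B} = {l. E1 l \<in> B}"
    proof safe
      fix l u assume "E l u \<in> B" thus "E1 l \<in> B" using up unfolding E_def by auto
    next
      fix l assume "E1 l \<in> B" thus "\<exists>u. E l u \<in> B" using ab2 unfolding E_def
        by (intro exI[of _ b2]) simp
    qed
    have s2: "{u. \<exists>l. E l u \<in> B} = {l. E2 l \<in> B}"
    proof safe
      fix l u assume "E l u \<in> B" thus "E2 u \<in> B" using up unfolding E_def by auto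
    next
      fix u assume "E2 u \<in> B" thus "\<exists>l. E l u \<in> B" using ab1 unfolding E_def
        by (intro exI[of _ b1]) simp
    qed
    show ?thesis unfolding assoc_fun_complex_def assoc_fun_re_def assoc_fun_im_def
        assoc_fun_def s1 s2 by (simp add: complex_eq_iff)
  qed
  show ?thesis using part1 part2 by blast
qed

end
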